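(* There exist a finite-horizon two-player Markov game $\mathcal{G}=(S,A_1,A_2,P,R_1,H,G)$, an abstraction $\phi$, and two peer policies $\pi_2^{e}$ and $\pi_2^{e+1}$ (a peer policy update $\pi_2^e\to\pi_2^{e+1}$) such that some $u\in\mathrm{Core}_\phi(\mathcal{S}_e)$ satisfies $u\notin\mathrm{Core}_\phi(\mathcal{S}_{e+1})$. Moreover, such examples can be chosen so that, after removing the trivial terminal (goal) symbol from all abstract trajectories, $\mathrm{Core}_\phi(\mathcal{S}_e)\cap\mathrm{Core}_\phi(\mathcal{S}_{e+1})=\varnothing$.
   Context: A two-player finite-horizon Markov game $\mathcal{G}=(S,A_1,A_2,P,R_1,H,G)$ has state set $S$, action sets $A_1$ (focal agent) and $A_2$ (peer), joint transition kernel $P(s'\mid s,a_1,a_2)$, focal reward $R_1(s,a_1,a_2)$, horizon $H<\infty$, and goal set $G\subseteq S$ (episodes terminate on first visit to $G$). In episode $e$ the peer follows a Markov policy $\pi_2^e(\cdot\mid s)$, inducing the single-agent MDP $M_e=(S,A_1,P_e,R_e,H,G)$ with $P_e(s'\mid s,a_1)=\sum_{a_2\in A_2}P(s'\mid s,a_1,a_2)\pi_2^e(a_2\mid s)$ and $R_e(s,a_1)=\sum_{a_2}R_1(s,a_1,a_2)\pi_2^e(a_2\mid s)$. A trajectory is $\tau=(s_1,a_1,\dots,s_T,a_T)$ with $T\le H$, a word over $S\times A_1$; $\mathcal{S}_e$ is the set of successful trajectories of $M_e$, i.e. trajectories realizable in $M_e$ (each transition $s_t\to s_{t+1}$ has positive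 probability under $P_e(\cdot\mid s_t,a_t)$, from the game's initial state) that reach $G$ at some $t\le H$. For sequences $u,v$, $u\preccurlyeq v$ means $u$ is a (not necessarily contiguous) subsequence of $v$. An abstraction is a map $\phi:S\times A_1\to\Sigma$ applied letterwise. The episode-wise invariant core is $\mathrm{Core}_\phi(\mathcal{S}_e)=\max_{\preccurlyeq}\{u\in\Sigma^{\le H}:\ \forall\tau\in\mathcal{S}_e,\ u\preccurlyeq\phi(\tau)\}$, the set of $\preccurlyeq$-maximal common subsequences (of length at most $H$) of all $\phi(\tau)$, $\tau\in\mathcal{S}_e$. *)

theory Defs
  imports Complex_Main "HOL-Library.Sublist"
begin

text \<open>States, actions (of both players)
and abstract symbols are encoded as natural numbers; the actual sets are the
finite carriers below. trans g s a1 a2 s' is P(s' | s, a1, a2).\<close>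

record mgame =
  states  :: "nat set"
  act1    :: "nat set"
  act2    :: "nat set"
  trans   :: "nat \<Rightarrow> nat \<Rightarrow> nat \<Rightarrow> nat \<Rightarrow> real"
  rew1    :: "nat \<Rightarrow> nat \<Rightarrow> nat \<Rightarrow> real"
  horizon :: nat
  goal    :: "nat set"
  init    :: nat

definition wf_game :: "mgame \<Rightarrow> bool" where
  "wf_game g \<longleftrightarrow>
     finite (states g) \<and> states g \<noteq> {} \<and>
     finite (act1 g) \<and> act1 g \<noteq> {} \<and>
     finite (act2 g) \<and> act2 g \<noteq> {} \<and>
     init g \<in> states g \<and> goal g \<subseteq> states g \<and>
     (\<forall>s\<in>states g. \<forall>a1\<in>act1 g. \<forall>a2\<in>act2 g.
        (\<forall>s'. trans g s a1 a2 s' \<ge> 0) \<and>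
        (\<forall>s'. s' \<notin> states g \<longrightarrow> trans g s a1 a2 s' = 0) \<and>
        (\<Sum>s'\<in>states g. trans g s a1 a2 s') = 1)"

definition peer_policy :: "mgame \<Rightarrow> (nat \<Rightarrow> nat \<Rightarrow> real) \<Rightarrow> bool" where
  "peer_policy g pol \<longleftrightarrow>
     (\<forall>s\<in>states g.
        (\<forall>a2. pol s a2 \<ge> 0) \<and>
        (\<forall>a2. a2 \<notin> act2 g \<longrightarrow> pol s a2 = 0) \<and>
        (\<Sum>a2\<in>act2 g. pol s a2) = 1)"

definition induced_trans :: "mgame \<Rightarrow> (nat \<Rightarrow> nat \<Rightarrow> real) \<Rightarrow> nat \<Rightarrow> nat \<Rightarrow> nat \<Rightarrow> real" where
  "induced_trans g pol s a1 s' = (\<Sum>a2\<in>act2 g. trans g s a1 a2 s' * pol s a2)"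

definition successful :: "mgame \<Rightarrow> (nat \<Rightarrow> nat \<Rightarrow> real) \<Rightarrow> (nat \<times> nat) list set" where
  "successful g pol = {\<tau>. \<tau> \<noteq> [] \<and> length \<tau> \<le> horizon g \<and>
      fst (hd \<tau>) = init g \<and>
      (\<forall>i < length \<tau>. fst (\<tau> ! i) \<in> states g \<and> snd (\<tau> ! i) \<in> act1 g) \<and>
      (\<forall>i. Suc i < length \<tau> \<longrightarrow>
           induced_trans g pol (fst (\<tau> ! i)) (snd (\<tau> ! i)) (fst (\<tau> ! Suc i)) > 0) \<and>
      fst (last \<tau>) \<in> goal g \<and>
      (\<forall>i. Suc i < length \<tau> \<longrightarrow> fst (\<tau> ! i) \<notin> goal g)}"

definition core_words :: "nat \<Rightarrow> 'b list set \<Rightarrow> 'b list set" where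
  "core_words H W =
     {u. length u \<le> H \<and> (\<forall>w\<in>W. subseq u w) \<and>
         \<not> (\<exists>v. length v \<le> H \<and> (\<forall>w\<in>W. subseq v w) \<and> subseq u v \<and> u \<noteq> v)}"

definition core :: "mgame \<Rightarrow> (nat \<times> nat \<Rightarrow> 'b) \<Rightarrow> (nat \<Rightarrow> nat \<Rightarrow> real) \<Rightarrow> 'b list set" where
  "core g \<phi> pol = core_words (horizon g) (map \<phi> ` successful g pol)"

definition core_noterm :: "mgame \<Rightarrow> (nat \<times> nat \<Rightarrow> 'b) \<Rightarrow> (nat \<Rightarrow> nat \<Rightarrow> real) \<Rightarrow> 'b list set" where
  "core_noterm g \<phi> pol = core_words (horizon g) ((\<lambda>\<tau>. butlast (map \<phi> \<tau>)) ` successful g pol)"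

end

theory Submission
  imports Defs
begin

definition G0 :: mgame where
  "G0 = \<lparr> states = {0,1,2,3}, act1 = {0}, act2 = {0,1},
          trans = (\<lambda>s a1 a2 s'. if s = 0 then (if s' = a2 + 1 then 1 else 0)
                                else if s' = 3 then 1 else 0),
          rew1 = (\<lambda>_ _ _. 0), horizon = 3, goal = {3}, init = 0 \<rparr>"

definition P0 :: "nat \<Rightarrow> nat \<Rightarrow> real" where
  "P0 s a2 = (if a2 = 0 then 1 else 0)"
definition P1 :: "nat \<Rightarrow> nat \<Rightarrow> real" where
  "P1 s a2 = (if a2 = 1 then 1 else 0)"

lemma core_single:
  assumes "length w \<le> H" shows "core_words H {w} = {w}"
  using assms unfolding core_words_def
  by (auto dest: subseq_order.antisym)

lemma succ_gen:
  assumes m: "m \<in> {1,2}" and pol: "\<And>s. pol s = (\<lambda>a2. if a2 = m - 1 then 1 else 0)"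
  shows "successful G0 pol = {[(0,0),(m,0),(3,0)]}"
proof -
  have it: "induced_trans G0 pol s a s' = (if s = 0 then (if s' = m then 1 else 0)
                                else if s' = 3 then 1 else 0)" for s a s'
    using m by (auto simp: induced_trans_def G0_def pol)
  show ?thesis
  proof (rule set_eqI, rule iffI)
    fix t assume t: "t \<in> successful G0 pol"
    hence ne: "t \<noteq> []" and len: "length t \<le> 3" by (auto simp: successful_def G0_def)
    consider (a) x where "t = [x]" | (b) x y where "t = [x,y]" | (c) x y z where "t = [x,y,z]"
    proof -
      obtain x r where "t = x # r" using ne by (cases t) auto
      moreover have "length r \<le> 2" using len calculation by simp
      ultimately show ?thesis using that
        by (cases r; cases "tl r"; auto simp: length_Suc_conv)
    qed
    then show "t \<in> {[(0,0),(m,0),(3,0)]}"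
    proof cases
      case a thus ?thesis using t by (auto simp: successful_def G0_def)
    next
      case b thus ?thesis using t m
        apply (simp add: successful_def it)
        apply (auto simp: G0_def split: if_splits)
        done
    next
      case c
      have "\<forall>i. Suc i < length t \<longrightarrow> induced_trans G0 pol (fst (t ! i)) (snd (t ! i)) (fst (t ! Suc i)) > 0"
        using t by (simp add: successful_def)
      from this[rule_format, of 0] this[rule_format, of 1]
      have tr: "induced_trans G0 pol (fst x) (snd x) (fst y) > 0"
               "induced_trans G0 pol (fst y) (snd y) (fst z) > 0" using c by auto
      have st: "\<forall>i<3. fst (t ! i) \<in> states G0 \<and> snd (t ! i) \<in> act1 G0"
        and h: "fst (hd t) = init G0" using t c by (auto simp: successful_def)
      from st have "snd x = 0" "snd y = 0" "snd z = 0" using c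
        by (auto simp: G0_def dest: spec[of _ 0] spec[of _ 1] spec[of _ 2])
      moreover have "fst x = 0" using h c by (simp add: G0_def)
      moreover have "fst y = m" using tr(1) calculation by (simp add: it split: if_splits)
      moreover have "fst z = 3" using tr(2) calculation m by (auto simp: it split: if_splits)
      ultimately show ?thesis using c by (auto intro: prod_eqI)
    qed
  next
    fix t assume "t \<in> {[(0::nat,0::nat),(m,0),(3,0)]}"
    hence t: "t = [(0,0),(m,0),(3,0)]" by simp
    have "fst (t ! i) \<in> states G0 \<and> snd (t ! i) \<in> act1 G0" if "i < length t" for i
      using that m t by (auto simp: G0_def less_Suc_eq nth_Cons')
    moreover have "induced_trans G0 pol (fst (t ! i)) (snd (t ! i)) (fst (t ! Suc i)) > 0"
      if "Suc i < length t" for i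
      using that m t by (auto simp: it less_Suc_eq nth_Cons')
    moreover have "fst (t ! i) \<notin> goal G0" if "Suc i < length t" for i
      using that m t by (auto simp: G0_def less_Suc_eq nth_Cons')
    ultimately show "t \<in> successful G0 pol" using m t
      by (simp add: successful_def) (simp add: G0_def)
  qed
qed

theorem proposition1:
  shows "\<exists>(g::mgame) (\<phi>::nat \<times> nat \<Rightarrow> nat) pi_e pi_e1.
           wf_game g \<and> peer_policy g pi_e \<and> peer_policy g pi_e1 \<and>
           successful g pi_e \<noteq> {} \<and> successful g pi_e1 \<noteq> {} \<and>
           (\<exists>u \<in> core g \<phi> pi_e. u \<notin> core g \<phi> pi_e1) \<and>
           core_noterm g \<phi> pi_e \<inter> core_noterm g \<phi> pi_e1 = {}"
proof -
  have s0: "successful G0 P0 = {[(0,0),(1,0),(3,0)]}"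
    by (rule succ_gen) (auto simp: P0_def)
  have s1: "successful G0 P1 = {[(0,0),(2,0),(3,0)]}"
    by (rule succ_gen) (auto simp: P1_def)
  have h: "horizon G0 = 3" by (simp add: G0_def)
  have wf: "wf_game G0" by (simp add: wf_game_def G0_def)
  have p0: "peer_policy G0 P0" by (simp add: peer_policy_def G0_def P0_def)
  have p1: "peer_policy G0 P1" by (simp add: peer_policy_def G0_def P1_def)
  have c0: "core G0 fst P0 = {[0,1,3]}" unfolding core_def s0 h
    by (simp add: core_single)
  have c1: "core G0 fst P1 = {[0,2,3]}" unfolding core_def s1 h
    by (simp add: core_single)
  have n0: "core_noterm G0 fst P0 = {[0,1]}" unfolding core_noterm_def s0 h
    by (simp add: core_single)
  have n1: "core_noterm G0 fst P1 = {[0,2]}" unfolding core_noterm_def s1 h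
    by (simp add: core_single)
  show ?thesis
    apply (rule exI[of _ G0], rule exI[of _ fst], rule exI[of _ P0], rule exI[of _ P1])
    using wf p0 p1 s0 s1 c0 c1 n0 n1 by simp
qed

end
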